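(* Let $n,m\geq 1$. Define a map $\Phi$ from $\mathscr H_m(n)$ to the set of $(2m+1)$-historic trees on $n$ vertices recursively: $\Phi(T_1)$ is the one-vertex historic tree (vertex labelled $1$); if $\Phi(T_1,\dots,T_k)=H_k$ has been constructed and $T_{k+1}$ arises from $T_k$ by inserting a key into the $i$-th leaf of $T_k$ (counted from left to right, before any splits are performed), then $\Phi(T_1,\dots,T_{k+1})=H_{k+1}$ is obtained from $H_k$ by placing a new vertex labelled $k+1$ at the $i$-th external vertex of $H_k$ (counted from left to right). Then $\Phi$ is well defined (in particular, for every $k$ the number of external vertices of $H_k$ equals the number of leaves of $T_k$), and $\Phi$ is a bijection between $\mathscr H_m(n)$ and the set of all $(2m+1)$-historic trees on $n$ vertices.
   Context: Fix an integer $m\geq 1$. A $B$-tree of order $2m+1$ is a rooted plane tree whose nodes contain pairwise distinct real keys such that: keys are stored in increasing order from left to right; a non-leaf node with $k$ keys has exactly $k+1$ children, the $i$-th child being attached between the $(i-1)$-th and $i$-th key of the node (the first child to the left of the first key, the last to the right of the last key), with all keys in the subtree of that child lying between those two keys; every node contains between $m$ and $2m$ keys, except the root, which contains between $1$ and $2m$ keys; and all leaves have the same distance to the root. Insertion algorithm: a new key is placed in the appropriate leaf at the appropriate position; if that leaf now has $2m+1$ keys, it is split: its median key moves up into the parent node (at the appropriate position), and the $m$ smallest and the $m$ largest keys form two new nodes, which become the children of the parent on either side of the moved key; this is repeated at the parent if it now contains $2m+1$ keys; if the root gets $2m+1$ keys, a new root containing only its median key is created above it, with the two halves as its children. $B$-trees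 are considered up to isomorphism of rooted plane trees (only the shape and the number of keys in each node matter); leaves are numbered from left to right. A history of a $B$-tree $T_n$ with $n$ keys is a sequence $(T_1,\dots,T_n)$ of $B$-trees of order $2m+1$ such that $T_1$ is the single node containing one key and $T_i$ is obtained from $T_{i-1}$ by inserting one key with the insertion algorithm ($i=2,\dots,n$). $\mathscr H_m(n)$ denotes the set of all histories of all $B$-trees of order $2m+1$ with $n$ keys. A $(2m+1)$-historic tree on $n$ vertices is a rooted plane tree whose $n$ vertices are labelled bijectively by $\{1,\dots,n\}$ so that labels increase along every path from the root to a leaf, and such that (with the root at height $0$) the vertices at heights $2m,3m+1,4m+2,\dots$ (i.e. heights $2m+j(m+1)$, $j\geq 0$), called branchings, have two ordered child slots (left and right), each of which may or may not be occupied by a child, while every other vertex has a single child slot (so at most one child). The vertices of the tree are called internal; the unoccupied child slots are called external vertices, ordered from left to right by the planar structure. *)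

theory Defs
  imports Main
begin

text \<open>A B-tree shape: a node stores only its number of keys and its (ordered)
list of children; a leaf has no children.\<close>

datatype btree = BNode nat "btree list"

fun nleaves :: "btree \<Rightarrow> nat" where
  "nleaves (BNode k ts) = (if ts = [] then 1 else sum_list (map nleaves ts))"

fun leaf_depths :: "btree \<Rightarrow> nat set" where
  "leaf_depths (BNode k ts) = (if ts = [] then {0} else (\<Union>t\<in>set ts. Suc ` leaf_depths t))"

text \<open>Node-size and child-count conditions; \<open>lo\<close> is the lower bound on the number of
keys of the current node (1 for the root, m for all other nodes).\<close>
fun wf_btree :: "nat \<Rightarrow> nat \<Rightarrow> btree \<Rightarrow> bool" where
  "wf_btree m lo (BNode k ts) =
     (lo \<le> k \<and> k \<le> 2*m \<and> (ts = [] \<or> length ts = k + 1) \<and> (\<forall>t\<in>set ts. wf_btree m m t))"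

definition is_btree :: "nat \<Rightarrow> btree \<Rightarrow> bool" where
  "is_btree m t \<longleftrightarrow> wf_btree m 1 t \<and> (\<exists>d. leaf_depths t = {d})"

text \<open>Result of inserting into a subtree: either the subtree (no overflow at its root),
or the two halves of its split root (the median key moves up to the parent).\<close>
datatype ires = Ok btree | Spl btree btree

text \<open>\<open>ins m t i\<close>: insert a key into the i-th leaf (0-based, left to right) of \<open>t\<close>;
\<open>ins_f m ts i\<close>: the same for the i-th leaf of the forest \<open>ts\<close>, returning the new
forest and whether a child was split (so that the parent received one more key).
Since only shapes matter, the position of the new key inside the leaf is irrelevant.\<close>
fun ins :: "nat \<Rightarrow> btree \<Rightarrow> nat \<Rightarrow> ires"
and ins_f :: "nat \<Rightarrow> btree list \<Rightarrow> nat \<Rightarrow> btree list \<times> bool" where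
  "ins m (BNode k ts) i =
     (if ts = [] then
        (if Suc k = 2*m+1 then Spl (BNode m []) (BNode m []) else Ok (BNode (Suc k) []))
      else (case ins_f m ts i of
              (ts', False) \<Rightarrow> Ok (BNode k ts')
            | (ts', True) \<Rightarrow>
                (if Suc k = 2*m+1 then Spl (BNode m (take (m+1) ts')) (BNode m (drop (m+1) ts'))
                 else Ok (BNode (Suc k) ts'))))"
| "ins_f m [] i = ([], False)"
| "ins_f m (t # ts) i =
     (if i < nleaves t then
        (case ins m t i of Ok t' \<Rightarrow> (t' # ts, False) | Spl l r \<Rightarrow> (l # r # ts, True))
      else (case ins_f m ts (i - nleaves t) of (ts', b) \<Rightarrow> (t # ts', b)))"

definition btree_insert :: "nat \<Rightarrow> btree \<Rightarrow> nat \<Rightarrow> btree" where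
  "btree_insert m t i = (case ins m t i of Ok t' \<Rightarrow> t' | Spl l r \<Rightarrow> BNode 1 [l, r])"

text \<open>Histories \<open>(T_1,\<dots>,T_n)\<close>, as lists indexed from 0.\<close>
definition histories :: "nat \<Rightarrow> nat \<Rightarrow> btree list set" where
  "histories m n = {Ts. length Ts = n \<and> Ts ! 0 = BNode 1 [] \<and>
      (\<forall>i<n. is_btree m (Ts ! i)) \<and>
      (\<forall>i. 0 < i \<and> i < n \<longrightarrow>
         (\<exists>l < nleaves (Ts ! (i-1)). Ts ! i = btree_insert m (Ts ! (i-1)) l))}"

definition branching :: "nat \<Rightarrow> nat \<Rightarrow> bool" where
  "branching m d \<longleftrightarrow> 2*m \<le> d \<and> (d - 2*m) mod (m+1) = 0"

text \<open>A vertex with one child slot (\<open>V1\<close>) or two ordered child slots (\<open>V2\<close>);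
a slot is either external (\<open>Ext\<close>) or occupied by a subtree.\<close>
datatype htree = V1 nat hslot | V2 nat hslot hslot
     and hslot = Ext | Sub htree

primrec label :: "htree \<Rightarrow> nat" where
  "label (V1 l s) = l"
| "label (V2 l s1 s2) = l"

primrec labels_h :: "htree \<Rightarrow> nat list" and labels_s :: "hslot \<Rightarrow> nat list" where
  "labels_h (V1 l s) = l # labels_s s"
| "labels_h (V2 l s1 s2) = l # labels_s s1 @ labels_s s2"
| "labels_s Ext = []"
| "labels_s (Sub h) = labels_h h"

text \<open>\<open>hwf m d h\<close>: h sits at height d; branchings (and only they) have two slots;
labels increase from parent to child.\<close>
primrec hwf :: "nat \<Rightarrow> nat \<Rightarrow> htree \<Rightarrow> bool"
and swf :: "nat \<Rightarrow> nat \<Rightarrow> nat \<Rightarrow> hslot \<Rightarrow> bool" where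
  "hwf m d (V1 l s) = (\<not> branching m d \<and> swf m (Suc d) l s)"
| "hwf m d (V2 l s1 s2) = (branching m d \<and> swf m (Suc d) l s1 \<and> swf m (Suc d) l s2)"
| "swf m d p Ext = True"
| "swf m d p (Sub h) = (p < label h \<and> hwf m d h)"

definition historic :: "nat \<Rightarrow> nat \<Rightarrow> htree \<Rightarrow> bool" where
  "historic m n h \<longleftrightarrow> hwf m 0 h \<and> distinct (labels_h h) \<and> set (labels_h h) = {1..n}"

primrec ext_h :: "htree \<Rightarrow> nat" and ext_s :: "hslot \<Rightarrow> nat" where
  "ext_h (V1 l s) = ext_s s"
| "ext_h (V2 l s1 s2) = ext_s s1 + ext_s s2"
| "ext_s Ext = 1"
| "ext_s (Sub h) = ext_h h"

definition new_vertex :: "nat \<Rightarrow> nat \<Rightarrow> nat \<Rightarrow> htree" where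
  "new_vertex m d lab = (if branching m d then V2 lab Ext Ext else V1 lab Ext)"

text \<open>Place a new vertex labelled \<open>lab\<close> at the i-th external vertex (0-based, left to right);
\<open>d\<close> is the height of the vertex (resp. of the vertex that would occupy the slot).\<close>
primrec add_h :: "nat \<Rightarrow> nat \<Rightarrow> nat \<Rightarrow> htree \<Rightarrow> nat \<Rightarrow> htree"
and add_s :: "nat \<Rightarrow> nat \<Rightarrow> nat \<Rightarrow> hslot \<Rightarrow> nat \<Rightarrow> hslot" where
  "add_h m d lab (V1 l s) i = V1 l (add_s m (Suc d) lab s i)"
| "add_h m d lab (V2 l s1 s2) i =
     (if i < ext_s s1 then V2 l (add_s m (Suc d) lab s1 i) s2
      else V2 l s1 (add_s m (Suc d) lab s2 (i - ext_s s1)))"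
| "add_s m d lab Ext i = Sub (new_vertex m d lab)"
| "add_s m d lab (Sub h) i = Sub (add_h m d lab h i)"

definition leaf_of :: "nat \<Rightarrow> btree \<Rightarrow> btree \<Rightarrow> nat" where
  "leaf_of m T T' = (THE l. l < nleaves T \<and> T' = btree_insert m T l)"

text \<open>\<open>phi_pref m Ts k\<close> = \<open>H_{k+1} = \<Phi>(T_1,\<dots>,T_{k+1})\<close>.\<close>
primrec phi_pref :: "nat \<Rightarrow> btree list \<Rightarrow> nat \<Rightarrow> htree" where
  "phi_pref m Ts 0 = new_vertex m 0 1"
| "phi_pref m Ts (Suc k) =
     add_h m 0 (k + 2) (phi_pref m Ts k) (leaf_of m (Ts ! k) (Ts ! Suc k))"

definition Phi :: "nat \<Rightarrow> btree list \<Rightarrow> htree" where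
  "Phi m Ts = phi_pref m Ts (length Ts - 1)"

end

theory Submission imports Defs begin

fun lks :: "btree \<Rightarrow> nat list" where
  "lks (BNode k ts) = (if ts = [] then [k] else concat (map lks ts))"

definition gb :: "nat \<Rightarrow> nat \<Rightarrow> nat list" where
  "gb m c = (if Suc c = 2*m+1 then [m,m] else [Suc c])"

definition rep :: "(nat \<Rightarrow> nat list) \<Rightarrow> nat \<Rightarrow> nat list \<Rightarrow> nat list" where
  "rep g i xs = take i xs @ g (xs ! i) @ drop (Suc i) xs"

lemma rep_app1: "i < length xs \<Longrightarrow> rep g i (xs @ ys) = rep g i xs @ ys"
  by (simp add: rep_def nth_append)

lemma rep_app2: "\<not> i < length xs \<Longrightarrow> rep g i (xs @ ys) = xs @ rep g (i - length xs) ys"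
  by (simp add: rep_def nth_append Suc_diff_le)

lemma nleaves_lks: "nleaves t = length (lks t)"
  by (induction t rule: lks.induct) (auto simp: length_concat comp_def intro!: arg_cong[where f=sum_list])

lemma nleaves_pos: "nleaves t > 0"
proof (induction t rule: nleaves.induct)
  case (1 k ts)
  show ?case
  proof (cases ts)
    case (Cons t ts') then show ?thesis using 1 by simp
  qed simp
qed

lemma leaf_depths_ne: "leaf_depths t \<noteq> {}"
  by (induction t rule: leaf_depths.induct) auto

lemma depth_node: "ts \<noteq> [] \<Longrightarrow> leaf_depths (BNode k ts) = {d} \<Longrightarrow>
   \<exists>d'. d = Suc d' \<and> (\<forall>t\<in>set ts. leaf_depths t = {d'})"
proof -
  assume ts: "ts \<noteq> []" and h: "leaf_depths (BNode k ts) = {d}"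
  then have u: "(\<Union>t\<in>set ts. Suc ` leaf_depths t) = {d}" by simp
  have all: "\<forall>t\<in>set ts. Suc ` leaf_depths t = {d}"
  proof
    fix t assume "t \<in> set ts"
    then have "Suc ` leaf_depths t \<subseteq> {d}" using u by blast
    moreover have "Suc ` leaf_depths t \<noteq> {}" using leaf_depths_ne by simp
    ultimately show "Suc ` leaf_depths t = {d}" by blast
  qed
  obtain t0 where t0: "t0 \<in> set ts" using ts by (cases ts) auto
  then obtain x where x: "x \<in> leaf_depths t0" using leaf_depths_ne by blast
  have e: "Suc ` leaf_depths t0 = {d}" using all t0 by simp
  have "Suc x \<in> Suc ` leaf_depths t0" using x by simp
  then have "d = Suc x" using e by simp
  have "\<forall>t\<in>set ts. leaf_depths t = {x}"
  proof
    fix t assume "t \<in> set ts"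
    then have "Suc ` leaf_depths t = Suc ` {x}" using all \<open>d = Suc x\<close> by simp
    then show "leaf_depths t = {x}" by (rule inj_image_eq_iff[THEN iffD1, OF inj_Suc])
  qed
  then show ?thesis using \<open>d = Suc x\<close> by blast
qed

lemma depth_node2: "ts \<noteq> [] \<Longrightarrow> \<forall>t\<in>set ts. leaf_depths t = {d} \<Longrightarrow> leaf_depths (BNode k ts) = {Suc d}"
  by (cases ts) auto


definition insP :: "nat \<Rightarrow> nat \<Rightarrow> nat \<Rightarrow> btree \<Rightarrow> nat \<Rightarrow> bool" where
  "insP m lo d t i = (case ins m t i of
      Ok t' \<Rightarrow> wf_btree m lo t' \<and> leaf_depths t' = {d} \<and> lks t' = rep (gb m) i (lks t)
    | Spl l r \<Rightarrow> wf_btree m m l \<and> wf_btree m m r \<and> leaf_depths l = {d} \<and> leaf_depths r = {d}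
         \<and> lks l @ lks r = rep (gb m) i (lks t))"

definition insfP :: "nat \<Rightarrow> nat \<Rightarrow> btree list \<Rightarrow> nat \<Rightarrow> bool" where
  "insfP m d ts i = (case ins_f m ts i of (ts', b) \<Rightarrow>
      length ts' = length ts + (if b then 1 else 0) \<and>
      (\<forall>t\<in>set ts'. wf_btree m m t \<and> leaf_depths t = {d}) \<and>
      concat (map lks ts') = rep (gb m) i (concat (map lks ts)))"

lemma lks_node: "ts \<noteq> [] \<Longrightarrow> lks (BNode k ts) = concat (map lks ts)"
  by simp

lemma ins_props:
  shows "\<And>lo d. wf_btree m lo t \<Longrightarrow> leaf_depths t = {d} \<Longrightarrow> i < nleaves t \<Longrightarrow> 1 \<le> m \<Longrightarrow> insP m lo d t i"
  and "\<And>d. (\<forall>t\<in>set ts. wf_btree m m t \<and> leaf_depths t = {d}) \<Longrightarrow> i < sum_list (map nleaves ts) \<Longrightarrow> 1 \<le> m \<Longrightarrow> insfP m d ts i"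
proof (induction m t i and m ts i rule: ins_ins_f.induct)
  case (1 m k ts i lo d)
  show ?case
  proof (cases "ts = []")
    case True
    then have i0: "i = 0" using 1 by simp
    have d0: "d = 0" using 1 True by simp
    show ?thesis using 1 True i0 d0 by (auto simp: insP_def rep_def gb_def)
  next
    case False
    obtain d' where d': "d = Suc d'" "\<forall>t\<in>set ts. leaf_depths t = {d'}"
      using depth_node[OF False] 1(3) by blast
    have wf: "lo \<le> k" "k \<le> 2*m" "length ts = k+1" "\<forall>t\<in>set ts. wf_btree m m t"
      using 1(2) False by auto
    have ilt: "i < sum_list (map nleaves ts)" using 1(4) False by simp
    have IH: "insfP m d' ts i" using 1(1)[OF False] d' wf ilt 1(5) by blast
    obtain ts' b where tb: "ins_f m ts i = (ts', b)" by fastforce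
    have P: "length ts' = length ts + (if b then 1 else 0)"
       "\<forall>t\<in>set ts'. wf_btree m m t \<and> leaf_depths t = {d'}"
       "concat (map lks ts') = rep (gb m) i (concat (map lks ts))"
      using IH tb by (auto simp: insfP_def)
    have ne: "ts' \<noteq> []" using P(1) wf(3) by auto
    have L: "lks (BNode k ts) = concat (map lks ts)" using False by simp
    show ?thesis
    proof (cases b)
      case False
      have "ins m (BNode k ts) i = Ok (BNode k ts')" using tb False \<open>ts \<noteq> []\<close> by simp
      then show ?thesis unfolding insP_def using P wf ne d' False L
        by (auto simp: depth_node2)
    next
      case True
      note b = True
      show ?thesis
      proof (cases "Suc k = 2*m+1")
        case True
        have ins: "ins m (BNode k ts) i = Spl (BNode m (take (m+1) ts')) (BNode m (drop (m+1) ts'))"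
          using tb b True \<open>ts \<noteq> []\<close> by simp
        have len: "length ts' = 2*m+2" using P(1) wf(3) b True by simp
        have ne1: "take (m+1) ts' \<noteq> []" using len by (cases ts') auto
        have ne2: "drop (m+1) ts' \<noteq> []" using len by simp
        have s1: "\<forall>t\<in>set (take (m+1) ts'). wf_btree m m t \<and> leaf_depths t = {d'}"
          using P(2) by (meson in_set_takeD)
        have s2: "\<forall>t\<in>set (drop (m+1) ts'). wf_btree m m t \<and> leaf_depths t = {d'}"
          using P(2) by (meson in_set_dropD)
        have w1: "wf_btree m m (BNode m (take (m+1) ts'))" using s1 len by auto
        have w2: "wf_btree m m (BNode m (drop (m+1) ts'))" using s2 len by auto
        have dd1: "leaf_depths (BNode m (take (m+1) ts')) = {d}"
          using depth_node2[OF ne1] s1 d'(1) by blast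
        have dd2: "leaf_depths (BNode m (drop (m+1) ts')) = {d}"
          using depth_node2[OF ne2] s2 d'(1) by blast
        have "lks (BNode m (take (m+1) ts')) @ lks (BNode m (drop (m+1) ts')) = concat (map lks ts')"
          using ne1 ne2 by (simp flip: concat_append map_append)
        then show ?thesis unfolding insP_def ins using w1 w2 dd1 dd2 P(3) L by simp
      next
        case False
        have ins: "ins m (BNode k ts) i = Ok (BNode (Suc k) ts')"
          using tb b False \<open>ts \<noteq> []\<close> by simp
        show ?thesis unfolding insP_def ins using P wf ne d' False L b
          by (auto simp: depth_node2)
      qed
    qed
  qed
next
  case (2 m i d)
  then show ?case by simp
next
  case (3 m t ts i d)
  show ?case
  proof (cases "i < nleaves t")
    case True
    have IH: "insP m m d t i" using 3 True by simp
    have il: "i < length (lks t)" using True nleaves_lks by simp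
    show ?thesis
    proof (cases "ins m t i")
      case (Ok t')
      then show ?thesis using IH 3(3) True il by (auto simp: insP_def insfP_def rep_app1)
    next
      case (Spl l r)
      then show ?thesis using IH 3(3) True il by (auto simp: insP_def insfP_def rep_app1)
    qed
  next
    case False
    have IH: "insfP m d ts (i - nleaves t)" using 3 False by simp
    have il: "\<not> i < length (lks t)" using False nleaves_lks by simp
    obtain ts' b where tb: "ins_f m ts (i - nleaves t) = (ts', b)" by fastforce
    show ?thesis using IH tb 3(3) False il by (auto simp: insP_def insfP_def rep_app2 nleaves_lks)
  qed
qed

primrec eh_h :: "nat \<Rightarrow> htree \<Rightarrow> nat list" and eh_s :: "nat \<Rightarrow> hslot \<Rightarrow> nat list" where
  "eh_h d (V1 l s) = eh_s (Suc d) s"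
| "eh_h d (V2 l s1 s2) = eh_s (Suc d) s1 @ eh_s (Suc d) s2"
| "eh_s d Ext = [d]"
| "eh_s d (Sub h) = eh_h d h"

definition gh :: "nat \<Rightarrow> nat \<Rightarrow> nat list" where
  "gh m x = (if branching m x then [Suc x, Suc x] else [Suc x])"

lemma ext_eh: "ext_h h = length (eh_h d h)" "ext_s s = length (eh_s d s)"
  by (induction h and s arbitrary: d and d) auto

lemma add_eh: "i < ext_h h \<Longrightarrow> eh_h d (add_h m d lab h i) = rep (gh m) i (eh_h d h)"
  "i < ext_s s \<Longrightarrow> eh_s d (add_s m d lab s i) = rep (gh m) i (eh_s d s)"
proof (induction h and s arbitrary: d i and d i)
  case (V2 l s1 s2)
  then show ?case by (auto simp: rep_app1 rep_app2 ext_eh(2)[symmetric])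
next
  case Ext
  then show ?case by (auto simp: rep_def gh_def new_vertex_def)
qed auto

lemma label_add: "label (add_h m d lab h i) = label h"
  by (cases h) auto

lemma hwf_add: "hwf m d h \<Longrightarrow> (\<forall>x\<in>set (labels_h h). x < lab) \<Longrightarrow> hwf m d (add_h m d lab h i)"
  "swf m d p s \<Longrightarrow> p < lab \<Longrightarrow> (\<forall>x\<in>set (labels_s s). x < lab) \<Longrightarrow> swf m d p (add_s m d lab s i)"
  by (induction h and s arbitrary: d i and d p i) (auto simp: new_vertex_def label_add)

lemma set_add: "set (labels_h (add_h m d lab h i)) = insert lab (set (labels_h h))"
  "set (labels_s (add_s m d lab s i)) = insert lab (set (labels_s s))"
  by (induction h and s arbitrary: d i and d i) (auto simp: new_vertex_def)

lemma distinct_add: "distinct (labels_h (add_h m d lab h i)) = (lab \<notin> set (labels_h h) \<and> distinct (labels_h h))"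
  "distinct (labels_s (add_s m d lab s i)) = (lab \<notin> set (labels_s s) \<and> distinct (labels_s s))"
  by (induction h and s arbitrary: d i and d i) (auto simp: new_vertex_def set_add)

lemma lab_in_add: "lab \<in> set (labels_s (add_s m d lab s i))"
  by (simp add: set_add)

lemma label_nv: "label (new_vertex m d lab) = lab"
  by (simp add: new_vertex_def)

lemma label_in: "label h \<in> set (labels_h h)"
  by (cases h) auto

lemma add_inj:
  "lab \<notin> set (labels_h h) \<Longrightarrow> lab \<notin> set (labels_h h') \<Longrightarrow> i < ext_h h \<Longrightarrow> i' < ext_h h' \<Longrightarrow>
     add_h m d lab h i = add_h m d lab h' i' \<Longrightarrow> h = h' \<and> i = i'"
  "lab \<notin> set (labels_s s) \<Longrightarrow> lab \<notin> set (labels_s s') \<Longrightarrow> i < ext_s s \<Longrightarrow> i' < ext_s s' \<Longrightarrow>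
     add_s m d lab s i = add_s m d lab s' i' \<Longrightarrow> s = s' \<and> i = i'"
proof (induction h and s arbitrary: d h' i i' and d s' i i')
  case (V1 l s)
  then show ?case by (cases h') (auto split: if_splits)
next
  case (V2 l s1 s2)
  show ?case
  proof (cases h')
    case (V1 l' s')
    then show ?thesis using V2.prems by (auto split: if_splits)
  next
    case (V2 l' s1' s2')
    note h' = this
    show ?thesis
    proof (cases "i < ext_s s1")
      case True
      show ?thesis
      proof (cases "i' < ext_s s1'")
        case True
        then show ?thesis using V2.prems V2.IH(1)[of s1' i i' "Suc d"] \<open>i < ext_s s1\<close> h' by auto
      next
        case False
        then have "add_s m (Suc d) lab s1 i = s1'" using V2.prems \<open>i < ext_s s1\<close> h' by auto
        then have "lab \<in> set (labels_s s1')" using lab_in_add by metis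
        then show ?thesis using V2.prems h' by auto
      qed
    next
      case False
      show ?thesis
      proof (cases "i' < ext_s s1'")
        case True
        then have "add_s m (Suc d) lab s1' i' = s1" using V2.prems \<open>\<not> i < ext_s s1\<close> h' by auto
        then have "lab \<in> set (labels_s s1)" using lab_in_add by metis
        then show ?thesis using V2.prems h' by auto
      next
        case F2: False
        have "l = l'" "s1 = s1'" "add_s m (Suc d) lab s2 (i - ext_s s1) = add_s m (Suc d) lab s2' (i' - ext_s s1')"
          using V2.prems False F2 h' by auto
        then have "s2 = s2' \<and> i - ext_s s1 = i' - ext_s s1'"
          using V2.IH(2)[of s2' "i - ext_s s1" "i' - ext_s s1'" "Suc d"] V2.prems False F2 h' by auto
        then show ?thesis using \<open>l = l'\<close> \<open>s1 = s1'\<close> False F2 h' by auto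
      qed
    qed
  qed
next
  case Ext
  show ?case
  proof (cases s')
    case (Sub h0)
    then have "new_vertex m d lab = add_h m d lab h0 i'" using Ext.prems by simp
    then have "label h0 = lab" by (metis label_add label_nv)
    then show ?thesis using Ext.prems Sub label_in[of h0] by auto
  qed (use Ext.prems in auto)
next
  case (Sub h)
  show ?case
  proof (cases s')
    case Ext
    then have "new_vertex m d lab = add_h m d lab h i" using Sub.prems by simp
    then have "label h = lab" by (metis label_add label_nv)
    then show ?thesis using Sub.prems Ext label_in[of h] by auto
  next
    case (Sub h0)
    then show ?thesis using Sub.prems Sub.IH[of h0 i i' d] by auto
  qed
qed

lemma label_min: "hwf m d h \<Longrightarrow> x \<in> set (labels_h h) \<Longrightarrow> label h \<le> x"
  "swf m d p s \<Longrightarrow> x \<in> set (labels_s s) \<Longrightarrow> p < x"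
  by (induction h and s arbitrary: d and d p) force+


lemma del_ex:
  "hwf m d h \<Longrightarrow> distinct (labels_h h) \<Longrightarrow> lab \<in> set (labels_h h) \<Longrightarrow> lab \<noteq> label h \<Longrightarrow>
     (\<forall>x\<in>set (labels_h h). x \<le> lab) \<Longrightarrow>
     \<exists>h' i. h = add_h m d lab h' i \<and> i < ext_h h' \<and> hwf m d h' \<and> label h' = label h"
  "swf m d p s \<Longrightarrow> distinct (labels_s s) \<Longrightarrow> lab \<in> set (labels_s s) \<Longrightarrow>
     (\<forall>x\<in>set (labels_s s). x \<le> lab) \<Longrightarrow>
     \<exists>s' i. s = add_s m d lab s' i \<and> i < ext_s s' \<and> swf m d p s'"
proof (induction h and s arbitrary: d and d p)
  case (V1 l s)
  have a: "swf m (Suc d) l s" "distinct (labels_s s)" "lab \<in> set (labels_s s)" "\<forall>x\<in>set (labels_s s). x \<le> lab"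
    using V1.prems by auto
  obtain s' i where "s = add_s m (Suc d) lab s' i" "i < ext_s s'" "swf m (Suc d) l s'"
    using V1.IH[OF a] by blast
  then show ?case using V1.prems
    by (intro exI[of _ "V1 l s'"] exI[of _ i]) auto
next
  case (V2 l s1 s2)
  show ?case
  proof (cases "lab \<in> set (labels_s s1)")
    case True
    have a: "swf m (Suc d) l s1" "distinct (labels_s s1)" "lab \<in> set (labels_s s1)" "\<forall>x\<in>set (labels_s s1). x \<le> lab"
      using V2.prems True by auto
    obtain s' i where "s1 = add_s m (Suc d) lab s' i" "i < ext_s s'" "swf m (Suc d) l s'"
      using V2.IH(1)[OF a] by blast
    then show ?thesis using V2.prems
      by (intro exI[of _ "V2 l s' s2"] exI[of _ i]) auto
  next
    case False
    then have "lab \<in> set (labels_s s2)" using V2.prems by auto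
    then have a: "swf m (Suc d) l s2" "distinct (labels_s s2)" "lab \<in> set (labels_s s2)" "\<forall>x\<in>set (labels_s s2). x \<le> lab"
      using V2.prems by auto
    obtain s' i where "s2 = add_s m (Suc d) lab s' i" "i < ext_s s'" "swf m (Suc d) l s'"
      using V2.IH(2)[OF a] by blast
    then show ?thesis using V2.prems
      by (intro exI[of _ "V2 l s1 s'"] exI[of _ "ext_s s1 + i"]) auto
  qed
next
  case Ext
  then show ?case by simp
next
  case (Sub h)
  show ?case
  proof (cases "lab = label h")
    case True
    have nv: "h = new_vertex m d lab"
    proof (cases h)
      case (V1 l s)
      have "s = Ext"
      proof (cases s)
        case (Sub h1)
        then have "l < label h1" "label h1 \<le> lab" using Sub.prems V1 label_in[of h1] by auto
        then show ?thesis using True V1 by simp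
      qed simp
      then show ?thesis using V1 True Sub.prems by (simp add: new_vertex_def)
    next
      case (V2 l s1 s2)
      have "s1 = Ext"
      proof (cases s1)
        case (Sub h1)
        then have "l < label h1" "label h1 \<le> lab" using Sub.prems V2 label_in[of h1] by auto
        then show ?thesis using True V2 by simp
      qed simp
      moreover have "s2 = Ext"
      proof (cases s2)
        case (Sub h1)
        then have "l < label h1" "label h1 \<le> lab" using Sub.prems V2 label_in[of h1] by auto
        then show ?thesis using True V2 by simp
      qed simp
      ultimately show ?thesis using V2 True Sub.prems by (simp add: new_vertex_def)
    qed
    show ?thesis using nv by (intro exI[of _ Ext] exI[of _ 0]) auto
  next
    case False
    have a: "hwf m d h" "distinct (labels_h h)" "lab \<in> set (labels_h h)" "lab \<noteq> label h" "\<forall>x\<in>set (labels_h h). x \<le> lab"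
      using Sub.prems False by auto
    obtain h' i where "h = add_h m d lab h' i" "i < ext_h h'" "hwf m d h'" "label h' = label h"
      using Sub.IH[OF a] by blast
    then show ?thesis using Sub.prems by (intro exI[of _ "Sub h'"] exI[of _ i]) auto
  qed
qed

lemma historic_pred:
  assumes "historic m (Suc n) h" "1 \<le> n"
  shows "\<exists>h' i. historic m n h' \<and> i < ext_h h' \<and> h = add_h m 0 (Suc n) h' i"
proof -
  have hw: "hwf m 0 h" and di: "distinct (labels_h h)" and st: "set (labels_h h) = {1..Suc n}"
    using assms(1) by (auto simp: historic_def)
  have "label h \<le> 1" using label_min(1)[OF hw, of 1] st by simp
  then have ne: "Suc n \<noteq> label h" using assms(2) by simp
  obtain h' i where h': "h = add_h m 0 (Suc n) h' i" "i < ext_h h'" "hwf m 0 h'"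
    using del_ex(1)[OF hw di _ ne] st by force
  have "Suc n \<notin> set (labels_h h')" "distinct (labels_h h')"
    using di h'(1) distinct_add(1) by auto
  moreover have "insert (Suc n) (set (labels_h h')) = {1..Suc n}" using st h'(1) set_add(1) by metis
  ultimately have "set (labels_h h') = {1..Suc n} - {Suc n}" by (metis Diff_insert_absorb)
  also have "\<dots> = {1..n}" by auto
  finally have "set (labels_h h') = {1..n}" .
  then show ?thesis using h' \<open>distinct (labels_h h')\<close> by (auto simp: historic_def)
qed

definition kf :: "nat \<Rightarrow> nat \<Rightarrow> nat" where
  "kf m x = (if x \<le> 2*m then x else m + (x - 2*m - 1) mod (m+1))"

lemma kf_gh: assumes "1 \<le> m" shows "map (kf m) (gh m x) = gb m (kf m x)"
proof -
  consider "x < 2*m" | "x = 2*m" | "x > 2*m" by linarith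
  then show ?thesis
  proof cases
    case 1
    then show ?thesis by (auto simp: kf_def gh_def gb_def branching_def)
  next
    case 2
    then show ?thesis using assms by (auto simp: kf_def gh_def gb_def branching_def)
  next
    case 3
    define y where "y = x - 2*m - 1"
    have x: "x = 2*m + 1 + y" using 3 y_def by simp
    have br: "branching m x \<longleftrightarrow> y mod (m+1) = m"
    proof -
      have "branching m x \<longleftrightarrow> Suc y mod (m+1) = 0" using x by (simp add: branching_def)
      also have "\<dots> \<longleftrightarrow> y mod (m+1) = m" by (simp add: mod_Suc)
      finally show ?thesis .
    qed
    have k1: "kf m x = m + y mod (m+1)" using x by (simp add: kf_def)
    have k2: "kf m (Suc x) = m + Suc y mod (m+1)" using x by (simp add: kf_def)
    have lt: "y mod (m+1) < m+1" by simp
    show ?thesis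
    proof (cases "y mod (m+1) = m")
      case True
      then show ?thesis using br k1 k2 by (simp add: gh_def gb_def mod_Suc)
    next
      case False
      then have "y mod (m+1) < m" using lt by linarith
      then show ?thesis using br k1 k2 False by (simp add: gh_def gb_def mod_Suc)
    qed
  qed
qed

lemma map_rep: "i < length xs \<Longrightarrow> (\<And>x. map f (g x) = g' (f x)) \<Longrightarrow>
   map f (rep g i xs) = rep g' i (map f xs)"
  by (simp add: rep_def take_map drop_map)

lemma ins_top:
  assumes "is_btree m T" "l < nleaves T" "1 \<le> m"
  shows "is_btree m (btree_insert m T l) \<and> lks (btree_insert m T l) = rep (gb m) l (lks T)"
proof -
  obtain d where w: "wf_btree m 1 T" "leaf_depths T = {d}" using assms(1) by (auto simp: is_btree_def)
  have P: "insP m 1 d T l" using ins_props(1)[OF w assms(2,3)] .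
  show ?thesis
  proof (cases "ins m T l")
    case (Ok t')
    then show ?thesis using P by (auto simp: insP_def btree_insert_def is_btree_def)
  next
    case (Spl a b)
    have "leaf_depths (BNode 1 [a,b]) = {Suc d}" using P Spl by (auto simp: insP_def)
    then show ?thesis using P Spl assms(3) by (auto simp: insP_def btree_insert_def is_btree_def)
  qed
qed

lemma rep_neq:
  assumes "l < l'" "l' < length xs" "\<And>c. g c \<noteq> [] \<and> hd (g c) \<noteq> c"
  shows "rep g l xs \<noteq> rep g l' xs"
proof
  assume e: "rep g l xs = rep g l' xs"
  have "rep g l xs ! l = hd (g (xs ! l))"
    using assms by (simp add: rep_def nth_append hd_conv_nth)
  moreover have "rep g l' xs ! l = xs ! l"
    using assms by (simp add: rep_def nth_append)
  ultimately show False using e assms(3)[of "xs ! l"] by simp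
qed

lemma insert_inj:
  assumes "is_btree m T" "1 \<le> m" "l < nleaves T" "l' < nleaves T"
    "btree_insert m T l = btree_insert m T l'"
  shows "l = l'"
proof (rule ccontr)
  assume ne: "l \<noteq> l'"
  have e: "rep (gb m) l (lks T) = rep (gb m) l' (lks T)"
    using ins_top[OF assms(1,3,2)] ins_top[OF assms(1,4,2)] assms(5) by simp
  have g: "\<And>c. gb m c \<noteq> [] \<and> hd (gb m c) \<noteq> c" using assms(2) by (auto simp: gb_def)
  show False
  proof (cases "l < l'")
    case True
    then show False using rep_neq[OF True _ g] e assms(4) nleaves_lks by metis
  next
    case False
    then have lt: "l' < l" using ne by simp
    show False using rep_neq[OF lt _ g] e assms(3) nleaves_lks by metis
  qed
qed

lemma hist_step:
  assumes "Ts \<in> histories m n" "1 \<le> m" "Suc k < n"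
  shows "leaf_of m (Ts!k) (Ts!Suc k) < nleaves (Ts!k) \<and>
         Ts!Suc k = btree_insert m (Ts!k) (leaf_of m (Ts!k) (Ts!Suc k))"
    and "\<exists>!l. l < nleaves (Ts!k) \<and> Ts!Suc k = btree_insert m (Ts!k) l"
proof -
  have "\<forall>i<n. is_btree m (Ts!i)" using assms(1) unfolding histories_def by blast
  then have bt: "is_btree m (Ts!k)" using assms(3) by simp
  have al: "\<forall>i. 0 < i \<and> i < n \<longrightarrow> (\<exists>l<nleaves (Ts ! (i - 1)). Ts ! i = btree_insert m (Ts ! (i - 1)) l)"
    using assms(1) unfolding histories_def by blast
  have c: "0 < Suc k \<and> Suc k < n" using assms(3) by simp
  have "\<exists>l<nleaves (Ts ! (Suc k - 1)). Ts ! Suc k = btree_insert m (Ts ! (Suc k - 1)) l"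
    using al c by blast
  then obtain l where l: "l < nleaves (Ts!k)" "Ts!Suc k = btree_insert m (Ts!k) l"
    unfolding diff_Suc_1 by blast
  show u: "\<exists>!l. l < nleaves (Ts!k) \<and> Ts!Suc k = btree_insert m (Ts!k) l"
  proof (rule ex1I[of _ l])
    show "l < nleaves (Ts!k) \<and> Ts!Suc k = btree_insert m (Ts!k) l" using l by simp
  next
    fix l' assume "l' < nleaves (Ts!k) \<and> Ts!Suc k = btree_insert m (Ts!k) l'"
    then have "l' < nleaves (Ts!k)" "btree_insert m (Ts!k) l' = btree_insert m (Ts!k) l" using l(2) by auto
    then show "l' = l" using insert_inj[OF bt assms(2) _ l(1)] by blast
  qed
  show "leaf_of m (Ts!k) (Ts!Suc k) < nleaves (Ts!k) \<and>
         Ts!Suc k = btree_insert m (Ts!k) (leaf_of m (Ts!k) (Ts!Suc k))"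
    unfolding leaf_of_def using theI'[OF u] .
qed

lemma leaf_of_insert:
  assumes "is_btree m T" "1 \<le> m" "i < nleaves T"
  shows "leaf_of m T (btree_insert m T i) = i"
  unfolding leaf_of_def
proof (rule the_equality)
  show "i < nleaves T \<and> btree_insert m T i = btree_insert m T i" using assms(3) by simp
next
  fix j assume "j < nleaves T \<and> btree_insert m T i = btree_insert m T j"
  then show "j = i" using insert_inj[OF assms(1,2), of j i] assms(3) by simp
qed

lemma nv0: "1 \<le> m \<Longrightarrow> new_vertex m 0 l = V1 l Ext"
  by (simp add: new_vertex_def branching_def)

lemma hist_inv:
  assumes "Ts \<in> histories m n" "1 \<le> m"
  shows "k < n \<Longrightarrow> lks (Ts!k) = map (kf m) (eh_h 0 (phi_pref m Ts k)) \<and> hwf m 0 (phi_pref m Ts k) \<and>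
     distinct (labels_h (phi_pref m Ts k)) \<and> set (labels_h (phi_pref m Ts k)) = {1..Suc k}"
proof (induction k)
  case 0
  have "Ts!0 = BNode 1 []" using assms by (simp add: histories_def)
  then show ?case using assms(2) by (simp add: nv0 kf_def branching_def)
next
  case (Suc k)
  let ?H = "phi_pref m Ts k" and ?l = "leaf_of m (Ts!k) (Ts!Suc k)"
  have IH: "lks (Ts!k) = map (kf m) (eh_h 0 ?H)" "hwf m 0 ?H" "distinct (labels_h ?H)"
    "set (labels_h ?H) = {1..Suc k}" using Suc by auto
  have st: "?l < nleaves (Ts!k)" "Ts!Suc k = btree_insert m (Ts!k) ?l"
    using hist_step(1)[OF assms Suc.prems] by auto
  have bt: "is_btree m (Ts!k)" using assms Suc.prems by (auto simp: histories_def)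
  have le: "?l < length (eh_h 0 ?H)" using st(1) IH(1) nleaves_lks[of "Ts!k"] by simp
  have le2: "?l < ext_h ?H" using le ext_eh(1)[of ?H 0] by simp
  have ph: "phi_pref m Ts (Suc k) = add_h m 0 (Suc (Suc k)) ?H ?l" by simp
  have "lks (Ts!Suc k) = rep (gb m) ?l (lks (Ts!k))" using ins_top[OF bt st(1) assms(2)] st(2) by simp
  also have "\<dots> = rep (gb m) ?l (map (kf m) (eh_h 0 ?H))" using IH(1) by simp
  also have "\<dots> = map (kf m) (rep (gh m) ?l (eh_h 0 ?H))"
    using map_rep[OF le, of "kf m" "gh m" "gb m"] kf_gh[OF assms(2)] by simp
  also have "\<dots> = map (kf m) (eh_h 0 (phi_pref m Ts (Suc k)))"
    using add_eh(1)[OF le2] ph by simp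
  finally have A: "lks (Ts!Suc k) = map (kf m) (eh_h 0 (phi_pref m Ts (Suc k)))" .
  have B: "hwf m 0 (phi_pref m Ts (Suc k))" using ph hwf_add(1)[OF IH(2)] IH(4) by auto
  have C: "distinct (labels_h (phi_pref m Ts (Suc k)))" using ph distinct_add(1) IH(3,4) by auto
  have D: "set (labels_h (phi_pref m Ts (Suc k))) = {1..Suc (Suc k)}" using ph set_add(1) IH(4) by auto
  show ?case using A B C D by blast
qed

lemma ext_phi:
  assumes "Ts \<in> histories m n" "1 \<le> m" "k < n"
  shows "ext_h (phi_pref m Ts k) = nleaves (Ts!k)"
  using hist_inv[OF assms(1,2) assms(3)] ext_eh(1)[of "phi_pref m Ts k" 0] nleaves_lks[of "Ts!k"] by simp

lemma phi_pref_cong: "(\<forall>j\<le>k. Ts!j = Ts'!j) \<Longrightarrow> phi_pref m Ts k = phi_pref m Ts' k"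
  by (induction k) auto

lemma Phi_inj:
  assumes "1 \<le> m" "1 \<le> n"
  shows "inj_on (Phi m) (histories m n)"
proof
  fix Ts Ts' assume A: "Ts \<in> histories m n" and A': "Ts' \<in> histories m n" and e: "Phi m Ts = Phi m Ts'"
  have len: "length Ts = n" "length Ts' = n" using A A' by (auto simp: histories_def)
  have claim: "k < n \<Longrightarrow> phi_pref m Ts k = phi_pref m Ts' k \<Longrightarrow> (\<forall>j\<le>k. Ts!j = Ts'!j)" for k
  proof (induction k)
    case 0
    then show ?case using A A' by (auto simp: histories_def)
  next
    case (Suc k)
    let ?H = "phi_pref m Ts k" and ?l = "leaf_of m (Ts!k) (Ts!Suc k)"
    let ?H' = "phi_pref m Ts' k" and ?l' = "leaf_of m (Ts'!k) (Ts'!Suc k)"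
    have st: "?l < nleaves (Ts!k)" "Ts!Suc k = btree_insert m (Ts!k) ?l"
      using hist_step(1)[OF A assms(1) Suc.prems(1)] by auto
    have st': "?l' < nleaves (Ts'!k)" "Ts'!Suc k = btree_insert m (Ts'!k) ?l'"
      using hist_step(1)[OF A' assms(1) Suc.prems(1)] by auto
    have i1: "set (labels_h ?H) = {1..Suc k}" using hist_inv[OF A assms(1)] Suc.prems by simp
    have i2: "set (labels_h ?H') = {1..Suc k}" using hist_inv[OF A' assms(1)] Suc.prems by simp
    have x1: "?l < ext_h ?H" using ext_phi[OF A assms(1)] st(1) Suc.prems by simp
    have x2: "?l' < ext_h ?H'" using ext_phi[OF A' assms(1)] st'(1) Suc.prems by simp
    have "add_h m 0 (Suc (Suc k)) ?H ?l = add_h m 0 (Suc (Suc k)) ?H' ?l'" using Suc.prems(2) by simp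
    moreover have ns: "Suc (Suc k) \<notin> set (labels_h ?H)" "Suc (Suc k) \<notin> set (labels_h ?H')" using i1 i2 by auto
    ultimately have "?H = ?H' \<and> ?l = ?l'" using add_inj(1)[OF ns x1 x2] by blast
    then have IH: "\<forall>j\<le>k. Ts!j = Ts'!j" using Suc by simp
    then have "Ts!Suc k = Ts'!Suc k" using st(2) st'(2) \<open>?H = ?H' \<and> ?l = ?l'\<close> by simp
    then show ?case using IH le_Suc_eq by auto
  qed
  have "phi_pref m Ts (n-1) = phi_pref m Ts' (n-1)" using e len by (simp add: Phi_def)
  moreover have "n - 1 < n" using assms(2) by simp
  ultimately have "\<forall>j\<le>n-1. Ts!j = Ts'!j" using claim by blast
  then show "Ts = Ts'" using len assms(2) by (intro nth_equalityI) auto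
qed

lemma Phi_historic:
  assumes "Ts \<in> histories m n" "1 \<le> m" "1 \<le> n"
  shows "historic m n (Phi m Ts)"
proof -
  have len: "length Ts = n" using assms by (simp add: histories_def)
  show ?thesis using hist_inv[OF assms(1,2), of "n-1"] assms len by (simp add: Phi_def historic_def)
qed

lemma Phi_surj:
  assumes "1 \<le> m"
  shows "1 \<le> n \<Longrightarrow> historic m n h \<Longrightarrow> \<exists>Ts\<in>histories m n. Phi m Ts = h"
proof (induction n arbitrary: h rule: nat_induct_at_least)
  case base
  have hw: "hwf m 0 h" and di: "distinct (labels_h h)" and st: "set (labels_h h) = {1..1}"
    using base by (auto simp: historic_def)
  have "h = V1 1 Ext"
  proof (cases h)
    case (V1 l s)
    have "l = 1" using st V1 by auto
    moreover have "s = Ext"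
    proof (cases s)
      case (Sub h1)
      then have "label h1 \<in> set (labels_h h)" using V1 label_in[of h1] by simp
      moreover have "label h1 \<noteq> l" using di V1 Sub label_in[of h1] by auto
      ultimately show ?thesis using st \<open>l = 1\<close> by simp
    qed simp
    ultimately show ?thesis using V1 by simp
  next
    case (V2 l s1 s2)
    then show ?thesis using hw assms by (simp add: branching_def)
  qed
  moreover have "[BNode 1 []] \<in> histories m 1"
    using assms by (auto simp: histories_def is_btree_def)
  ultimately show ?case using assms by (intro bexI[of _ "[BNode 1 []]"]) (auto simp: Phi_def nv0)
next
  case (Suc n)
  obtain h' i where h': "historic m n h'" "i < ext_h h'" "h = add_h m 0 (Suc n) h' i"
    using historic_pred[OF Suc.prems Suc.hyps(1)] by blast
  obtain Ts where Ts: "Ts \<in> histories m n" "Phi m Ts = h'" using Suc.IH h'(1) by blast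
  have len: "length Ts = n" using Ts by (simp add: histories_def)
  let ?T = "Ts!(n-1)"
  have bt: "is_btree m ?T" using Ts Suc.hyps by (auto simp: histories_def)
  have ph: "phi_pref m Ts (n-1) = h'" using Ts len by (simp add: Phi_def)
  have il: "i < nleaves ?T" using ext_phi[OF Ts(1) assms, of "n-1"] Suc.hyps h'(2) ph by simp
  define Ts2 where "Ts2 = Ts @ [btree_insert m ?T i]"
  have len2: "length Ts2 = Suc n" by (simp add: Ts2_def len)
  have nth1: "j < n \<Longrightarrow> Ts2!j = Ts!j" for j by (simp add: Ts2_def nth_append len)
  have nth2: "Ts2!n = btree_insert m ?T i" by (simp add: Ts2_def nth_append len)
  have H: "Ts2 \<in> histories m (Suc n)"
    unfolding histories_def
  proof (intro CollectI conjI allI impI)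
    show "length Ts2 = Suc n" by (rule len2)
    show "Ts2!0 = BNode 1 []" using nth1[of 0] Ts Suc.hyps by (simp add: histories_def)
  next
    fix j assume j: "j < Suc n"
    show "is_btree m (Ts2!j)"
    proof (cases "j < n")
      case True then show ?thesis using nth1 Ts by (auto simp: histories_def)
    next
      case False then have "j = n" using j by simp
      then show ?thesis using nth2 ins_top[OF bt il assms] by simp
    qed
  next
    fix j assume j: "0 < j \<and> j < Suc n"
    show "\<exists>l<nleaves (Ts2 ! (j - 1)). Ts2 ! j = btree_insert m (Ts2 ! (j - 1)) l"
    proof (cases "j < n")
      case True
      then show ?thesis using nth1[of j] nth1[of "j-1"] Ts j by (auto simp: histories_def)
    next
      case False then have "j = n" using j by simp
      then show ?thesis using nth2 nth1[of "n-1"] il Suc.hyps by auto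
    qed
  qed
  have e0: "phi_pref m Ts2 (n-1) = phi_pref m Ts (n-1)"
    by (rule phi_pref_cong) (use nth1 Suc.hyps in auto)
  have e1: "phi_pref m Ts2 (n-1) = h'" using e0 ph by simp
  have e2: "leaf_of m (Ts2!(n-1)) (Ts2!Suc (n-1)) = i"
  proof -
    have "Suc (n-1) = n" using Suc.hyps by simp
    then show ?thesis using nth1[of "n-1"] nth2 Suc.hyps leaf_of_insert[OF bt assms il] by simp
  qed
  have e3: "phi_pref m Ts2 (Suc (n-1)) = add_h m 0 (n-1+2) h' i"
    by (simp only: phi_pref.simps e1 e2)
  have e4: "n-1+2 = Suc n" "Suc (n-1) = n" using Suc.hyps by simp_all
  have "Phi m Ts2 = phi_pref m Ts2 (Suc (n-1))" unfolding Phi_def len2 e4(2) by simp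
  also have "\<dots> = h" unfolding e3 e4(1) h'(3) ..
  finally have "Phi m Ts2 = h" .
  then show ?case using H by blast
qed

theorem theorem1:
  fixes m n :: nat
  assumes "m \<ge> 1" and "n \<ge> 1"
  shows "(\<forall>Ts \<in> histories m n.
            (\<forall>k. 0 < k \<and> k < n \<longrightarrow>
               (\<exists>!l. l < nleaves (Ts ! (k-1)) \<and> Ts ! k = btree_insert m (Ts ! (k-1)) l)) \<and>
            (\<forall>k < n. ext_h (phi_pref m Ts k) = nleaves (Ts ! k)))
       \<and> bij_betw (Phi m) (histories m n) {h. historic m n h}"
proof -
  have P1: "\<exists>!l. l < nleaves (Ts ! (k-1)) \<and> Ts ! k = btree_insert m (Ts ! (k-1)) l"
    if Ts: "Ts \<in> histories m n" and k: "0 < k \<and> k < n" for Ts k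
  proof -
    have k1: "Suc (k-1) < n" using k by simp
    have k2: "Suc (k-1) = k" using k by simp
    show ?thesis using hist_step(2)[OF Ts assms(1) k1] unfolding k2 .
  qed
  have P2: "ext_h (phi_pref m Ts k) = nleaves (Ts ! k)"
    if Ts: "Ts \<in> histories m n" and k: "k < n" for Ts k
    using ext_phi[OF Ts assms(1) k] .
  have I: "inj_on (Phi m) (histories m n)" using Phi_inj[OF assms] .
  have S1: "Phi m ` histories m n \<subseteq> {h. historic m n h}"
  proof
    fix h assume "h \<in> Phi m ` histories m n"
    then obtain Ts where "Ts \<in> histories m n" "h = Phi m Ts" by (rule imageE)
    then show "h \<in> {h. historic m n h}" using Phi_historic[OF _ assms] by simp
  qed
  have S2: "{h. historic m n h} \<subseteq> Phi m ` histories m n"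
  proof
    fix h assume "h \<in> {h. historic m n h}"
    then obtain Ts where "Ts \<in> histories m n" "Phi m Ts = h"
      using Phi_surj[OF assms(1) assms(2)] by blast
    then show "h \<in> Phi m ` histories m n" by (rule rev_image_eqI[OF _ sym])
  qed
  have B: "bij_betw (Phi m) (histories m n) {h. historic m n h}"
    unfolding bij_betw_def using I S1 S2 by (rule conjI[OF _ equalityI])
  show ?thesis using P1 P2 B by blast
qed

end
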